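(* Fix $2\le d\le 7$ and let $(a,b,c)$ be given by: $d=2$: $(0.5,0.7,0.27)$; $d=3$: $(0.4,0.6,0.2)$; $d=4$: $(0.3,0.5,0.1)$; $d=5$: $(0.3,0.4,0.1)$; $d=6$: $(0.27,0.32,0.1)$; $d=7$: $(0.26,0.27,0.01)$. Then $\|D\psi_x\|<0.99$ for all $x\in\mathcal{S}_{a,b,c}$.
   Context: $\psi$ acts on sequences $x=(x_n)_{n\ge1}$ with nonnegative entries by $\psi(x)_1=\big(\frac{1+x_1+x_1x_2}{1+2x_1}\big)^d$ and $\psi(x)_n=x_{n-1}^d\big(\frac{1+x_n+x_nx_{n+1}}{1+x_{n-1}+x_{n-1}x_n}\big)^d$ for $n\ge2$; here it is restricted to $\mathcal{R}$, the set of sequences of the form $x_i=z_i/z_{i-1}$ ($x_i=0$ if $z_{i-1}=0$), $i\ge1$, for $z$ a symmetric probability distribution on $\mathbb{Z}$ whose support is an interval or all of $\mathbb{Z}$. $\mathcal{S}_{a,b,c}:=\{x\in\mathcal{R}: a\le x_1\le b,\ 0\le x_n\le c\ \forall n\ge2\}$. $D\psi_x$ is the linear operator $(D\psi_x y)_i=\sum_{j\ge1}\frac{\partial\psi_i}{\partial x_j}(x)\,y_j$ (only $|i-j|\le1$ terms are nonzero). Sequences are normed by $\|y\|=\sup_{i\ge1}|y_i|$ if $d=2$ and $\|y\|=|y_1|+\sup_{i\ge2}|y_i|$ if $3\le d\le7$, and $\|D\psi_x\|=\sup_{\|y\|=1}\|D\psi_xy\|$ is the operator norm. *)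

theory Defs
  imports "HOL-Analysis.Analysis"
begin

text \<open>Sequences x = (x_n)_{n \<ge> 1} are modelled as functions nat \<Rightarrow> real;
  the value at index 0 is irrelevant and never used.\<close>

definition psi :: "nat \<Rightarrow> (nat \<Rightarrow> real) \<Rightarrow> nat \<Rightarrow> real" where
  "psi d x n =
     (if n = 1 then ((1 + x 1 + x 1 * x 2) / (1 + 2 * x 1)) ^ d
      else x (n - 1) ^ d *
           ((1 + x n + x n * x (n + 1)) / (1 + x (n - 1) + x (n - 1) * x n)) ^ d)"

definition good_distr :: "(int \<Rightarrow> real) \<Rightarrow> bool" where
  "good_distr z \<longleftrightarrow>
     (\<forall>k. z k \<ge> 0) \<and> (z has_sum 1) UNIV \<and> (\<forall>k. z (- k) = z k) \<and>
     (\<forall>a b c. z a \<noteq> 0 \<longrightarrow> z b \<noteq> 0 \<longrightarrow> a \<le> c \<longrightarrow> c \<le> b \<longrightarrow> z c \<noteq> 0)"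

definition R_set :: "(nat \<Rightarrow> real) set" where
  "R_set = {x. \<exists>z. good_distr z \<and>
      (\<forall>i\<ge>1. x i = (if z (int i - 1) = 0 then 0 else z (int i) / z (int i - 1)))}"

definition S_set :: "real \<Rightarrow> real \<Rightarrow> real \<Rightarrow> (nat \<Rightarrow> real) set" where
  "S_set a b c = {x \<in> R_set. a \<le> x 1 \<and> x 1 \<le> b \<and> (\<forall>n\<ge>2. 0 \<le> x n \<and> x n \<le> c)}"

text \<open>Directional derivative operator: (D psi_x y)_i = sum_j (d psi_i / d x_j)(x) y_j;
  only indices j with |i - j| \<le> 1 (and j \<ge> 1) can contribute, all of which lie in {1..i+1}.\<close>
definition Dpsi :: "nat \<Rightarrow> (nat \<Rightarrow> real) \<Rightarrow> (nat \<Rightarrow> real) \<Rightarrow> nat \<Rightarrow> real" where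
  "Dpsi d x y i = (\<Sum>j\<in>{1..i+1}. deriv (\<lambda>t. psi d (x(j := t)) i) (x j) * y j)"

definition seqnorm :: "nat \<Rightarrow> (nat \<Rightarrow> real) \<Rightarrow> ereal" where
  "seqnorm d y =
     (if d = 2 then (SUP i\<in>{1..}. ereal \<bar>y i\<bar>)
      else ereal \<bar>y 1\<bar> + (SUP i\<in>{2..}. ereal \<bar>y i\<bar>))"

definition opnorm_Dpsi :: "nat \<Rightarrow> (nat \<Rightarrow> real) \<Rightarrow> ereal" where
  "opnorm_Dpsi d x = (SUP y\<in>{y. seqnorm d y = 1}. seqnorm d (Dpsi d x y))"

definition abc :: "nat \<Rightarrow> real \<times> real \<times> real" where
  "abc d = (if d = 2 then (0.5, 0.7, 0.27)
           else if d = 3 then (0.4, 0.6, 0.2)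
           else if d = 4 then (0.3, 0.5, 0.1)
           else if d = 5 then (0.3, 0.4, 0.1)
           else if d = 6 then (0.27, 0.32, 0.1)
           else (0.26, 0.27, 0.01))"

end

theory Submission
  imports Defs
begin


lemma deriv_pow_at:
  assumes "(f has_field_derivative f') (at t0)"
  shows "deriv (\<lambda>t. (f t)^d) t0 = real d * (f t0)^(d-1) * f'"
  by (rule DERIV_imp_deriv, rule DERIV_fun_pow[OF assms])

lemma psi_ge2:
  assumes "i \<ge> 2"
  shows "psi d x' i = (x'(i-1) * (1 + x' i + x' i * x'(i+1)) / (1 + x'(i-1) + x'(i-1) * x' i))^d"
  using assms by (simp add: psi_def power_mult_distrib power_divide)

lemma Dpsi_ge2:
  fixes x y :: "nat \<Rightarrow> real"
  assumes i: "i \<ge> 2" and pos: "x (i-1) \<ge> 0" "x i \<ge> 0" "x (i+1) \<ge> 0"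
  defines "u \<equiv> x (i-1)" and "z \<equiv> x i" and "w \<equiv> x (i+1)"
  defines "Nu \<equiv> 1 + u + u * z" and "Nz \<equiv> 1 + z + z * w"
  defines "q \<equiv> u * Nz / Nu"
  shows "Dpsi d x y i = real d * q^(d-1) * (Nz / Nu^2) * y (i-1)
            + real d * q^(d-1) * (u * (1 + w + u * w) / Nu^2) * y i
            + real d * q^(d-1) * (u * z / Nu) * y (i+1)"
proof -
  have Nu: "Nu > 0" using pos unfolding Nu_def u_def z_def
    by (metis add_pos_nonneg mult_nonneg_nonneg zero_less_one add_nonneg_nonneg)
  have ne: "i - 1 \<noteq> i" "i - 1 \<noteq> i + 1" "i \<noteq> i + 1" "i - 1 \<ge> 1" using i by auto
  define F where "F j = deriv (\<lambda>t. psi d (x(j := t)) i) (x j) * y j" for j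
  have zero: "F j = 0" if "j \<notin> {i-1, i, i+1}" for j
  proof -
    have "(\<lambda>t. psi d (x(j := t)) i) = (\<lambda>t. psi d x i)"
      using that i by (auto simp: psi_ge2)
    then show ?thesis by (simp add: F_def)
  qed
  have "Dpsi d x y i = sum F {1..i+1}" by (simp add: Dpsi_def F_def)
  also have "\<dots> = sum F {i-1, i, i+1}"
    by (rule sum.mono_neutral_right) (use i zero in auto)
  also have "\<dots> = F (i-1) + F i + F (i+1)" using ne by simp
  finally have D: "Dpsi d x y i = F (i-1) + F i + F (i+1)" .
  have d1: "F (i-1) = real d * q^(d-1) * (Nz / Nu^2) * y (i-1)"
  proof -
    have e: "(\<lambda>t. psi d (x(i-1 := t)) i) = (\<lambda>t. (t * Nz / (1 + t + t * z))^d)"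
      using i ne by (auto simp: psi_ge2 Nz_def z_def w_def)
    have "((\<lambda>t. t * Nz / (1 + t + t * z)) has_field_derivative (Nz / Nu^2)) (at u)"
      using Nu unfolding Nu_def
      by (auto intro!: derivative_eq_intros simp: field_simps power2_eq_square)
    then show ?thesis unfolding F_def e
      by (subst deriv_pow_at) (auto simp: q_def Nu_def u_def)
  qed
  have d2: "F i = real d * q^(d-1) * (u * (1 + w + u * w) / Nu^2) * y i"
  proof -
    have e: "(\<lambda>t. psi d (x(i := t)) i) = (\<lambda>t. (u * (1 + t + t * w) / (1 + u + u * t))^d)"
      using i ne by (auto simp: psi_ge2 u_def w_def)
    have "((\<lambda>t. u * (1 + t + t * w) / (1 + u + u * t)) has_field_derivative (u * (1 + w + u * w) / Nu^2)) (at z)"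
      using Nu unfolding Nu_def
      by (auto intro!: derivative_eq_intros simp: field_simps power2_eq_square)
    then show ?thesis unfolding F_def e
      by (subst deriv_pow_at) (auto simp: q_def Nu_def Nz_def z_def)
  qed
  have d3: "F (i+1) = real d * q^(d-1) * (u * z / Nu) * y (i+1)"
  proof -
    have e: "(\<lambda>t. psi d (x(i+1 := t)) i) = (\<lambda>t. (u * (1 + z + z * t) / Nu)^d)"
      using i ne by (auto simp: psi_ge2 u_def z_def Nu_def)
    have "((\<lambda>t. u * (1 + z + z * t) / Nu) has_field_derivative (u * z / Nu)) (at w)"
      using Nu by (auto intro!: derivative_eq_intros simp: field_simps)
    then show ?thesis unfolding F_def e
      by (subst deriv_pow_at) (auto simp: q_def Nz_def w_def)
  qed
  show ?thesis using D d1 d2 d3 by simp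
qed

lemma Dpsi_1:
  fixes x y :: "nat \<Rightarrow> real"
  assumes pos: "x 1 \<ge> 0" "x 2 \<ge> 0"
  defines "r \<equiv> (1 + x 1 + x 1 * x 2) / (1 + 2 * x 1)"
  shows "Dpsi d x y 1 = real d * r^(d-1) * ((x 2 - 1) / (1 + 2 * x 1)^2) * y 1
            + real d * r^(d-1) * (x 1 / (1 + 2 * x 1)) * y 2"
proof -
  have P: "1 + 2 * x 1 > 0" using pos by simp
  have "Dpsi d x y 1 = deriv (\<lambda>t. psi d (x(1 := t)) 1) (x 1) * y 1 + deriv (\<lambda>t. psi d (x(2 := t)) 1) (x 2) * y 2"
    by (simp add: Dpsi_def numeral_2_eq_2)
  moreover have e1: "(\<lambda>t. psi d (x(1 := t)) 1) = (\<lambda>t. ((1 + t + t * x 2) / (1 + 2 * t))^d)"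
    by (auto simp: psi_def)
  moreover have e2: "(\<lambda>t. psi d (x(2 := t)) 1) = (\<lambda>t. ((1 + x 1 + x 1 * t) / (1 + 2 * x 1))^d)"
    by (auto simp: psi_def)
  moreover have "((\<lambda>t. (1 + t + t * x 2) / (1 + 2 * t)) has_field_derivative ((x 2 - 1) / (1 + 2 * x 1)^2)) (at (x 1))"
    using P by (auto intro!: derivative_eq_intros simp: field_simps power2_eq_square)
  moreover have "((\<lambda>t. (1 + x 1 + x 1 * t) / (1 + 2 * x 1)) has_field_derivative (x 1 / (1 + 2 * x 1))) (at (x 2))"
    using P by (auto intro!: DERIV_cdivide derivative_eq_intros)
  ultimately show ?thesis
    by (simp add: deriv_pow_at r_def)
qed



lemma frac_le_cross:
  fixes A B C D :: real
  assumes "0 < B" "0 < D" "A * D \<le> C * B"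
  shows "A / B \<le> C / D"
  using assms by (simp add: divide_simps mult.commute)

lemma chain3:
  fixes A A' B B' :: real
  assumes "0 \<le> A" "A \<le> A'" "0 \<le> B" "B \<le> B'"
  shows "0 \<le> real d * A * B \<and> real d * A * B \<le> real d * A' * B'"
proof -
  have "A * B \<le> A' * B'" using assms by (intro mult_mono) auto
  then have "real d * (A * B) \<le> real d * (A' * B')" by (intro mult_left_mono) auto
  then show ?thesis using assms by (simp add: mult.assoc)
qed

lemma row_bounds:
  fixes d :: nat and L U c u z w :: real
  assumes L: "0 \<le> L" "L \<le> u" "u \<le> U" and zc: "0 \<le> z" "z \<le> c" and wc: "0 \<le> w" "w \<le> c"
  defines "Nu \<equiv> 1 + u + u * z" and "Nz \<equiv> 1 + z + z * w"
  defines "q \<equiv> u * Nz / Nu" and "nv \<equiv> 1 + c + c * c"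
  defines "Q \<equiv> U * nv / (1 + U * (1 + c))"
  shows "0 \<le> real d * q^(d-1) * (Nz / Nu^2) \<and>
         real d * q^(d-1) * (Nz / Nu^2) \<le> real d * Q^(d-1) * (nv / ((1 + L * (1 + c)) * (1 + L)))"
    and "0 \<le> real d * q^(d-1) * (u * (1 + w + u * w) / Nu^2) \<and>
         real d * q^(d-1) * (u * (1 + w + u * w) / Nu^2) \<le> real d * Q^(d-1) * (U / (1 + U) * (1 / (1 + L) + c))"
    and "0 \<le> real d * q^(d-1) * (u * z / Nu) \<and>
         real d * q^(d-1) * (u * z / Nu) \<le> real d * Q^(d-1) * (U / (1 + U) * c)"
proof -
  have u0: "0 \<le> u" using L by linarith
  have c0: "0 \<le> c" using zc by linarith
  have uz: "0 \<le> u * z" using u0 zc by simp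
  have zw: "0 \<le> z * w" using wc zc by simp
  have Nu1: "1 + u \<le> Nu" using uz by (simp add: Nu_def)
  have Nu0: "0 < Nu" using Nu1 u0 by linarith
  have Nz0: "0 < Nz" using zc zw by (simp add: Nz_def)
  have uc: "0 \<le> u * c" using u0 c0 by simp
  have Lc: "0 \<le> L * c" using L c0 by simp
  define rho where "rho = Nz / Nu"
  have rho0: "0 \<le> rho" using Nz0 Nu0 by (simp add: rho_def)
  have rho1: "rho \<le> nv / (1 + u * (1 + c))"
  proof -
    have "z * w \<le> z * c" using zc wc by (simp add: mult_left_mono)
    then have a: "Nz \<le> 1 + z + z * c" by (simp add: Nz_def)
    have b: "nv * Nu - (1 + z + z * c) * (1 + u * (1 + c)) = (c - z) * (1 + c + u * c)"
      by (simp add: nv_def Nu_def algebra_simps)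
    have "0 \<le> (c - z) * (1 + c + u * c)" using zc c0 uc by simp
    then have "(1 + z + z * c) * (1 + u * (1 + c)) \<le> nv * Nu" using b by linarith
    moreover have "Nz * (1 + u * (1 + c)) \<le> (1 + z + z * c) * (1 + u * (1 + c))"
      using a uc u0 by (intro mult_right_mono) (auto simp: algebra_simps)
    ultimately have "Nz * (1 + u * (1 + c)) \<le> nv * Nu" by linarith
    then show ?thesis unfolding rho_def
      by (intro frac_le_cross) (use Nu0 uc u0 in \<open>auto simp: algebra_simps\<close>)
  qed
  have rho2: "nv / (1 + u * (1 + c)) \<le> nv / (1 + L * (1 + c))"
  proof -
    have "0 \<le> nv" using c0 by (simp add: nv_def)
    moreover have "L * (1 + c) \<le> u * (1 + c)" using L c0 by (intro mult_right_mono) auto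
    moreover have p1: "0 < 1 + L * (1 + c)" using Lc L by (simp add: algebra_simps)
    moreover have p2: "0 < 1 + u * (1 + c)" using uc u0 by (simp add: algebra_simps)
    ultimately show ?thesis
      by (intro divide_left_mono) (auto intro: mult_pos_pos)
  qed
  have q_eq: "q = u * rho" by (simp add: q_def rho_def)
  have q0: "0 \<le> q" using q_eq u0 rho0 by simp
  have qQ: "q \<le> Q"
  proof -
    have "q \<le> u * (nv / (1 + u * (1 + c)))" unfolding q_eq using rho1 u0 by (rule mult_left_mono)
    also have "\<dots> = u * nv / (1 + u * (1 + c))" by simp
    also have "\<dots> \<le> Q" unfolding Q_def
    proof (rule frac_le_cross)
      show "0 < 1 + u * (1 + c)" using uc u0 by (simp add: algebra_simps) 
      show "0 < 1 + U * (1 + c)" using uc u0 L c0 by (smt (verit) mult_nonneg_nonneg)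
      have "U * nv * (1 + u * (1 + c)) - u * nv * (1 + U * (1 + c)) = nv * (U - u)"
        by (simp add: algebra_simps)
      moreover have "0 \<le> nv * (U - u)" using L c0 by (simp add: nv_def)
      ultimately show "u * nv * (1 + U * (1 + c)) \<le> U * nv * (1 + u * (1 + c))" by linarith
    qed
    finally show ?thesis .
  qed
  have Q0: "0 \<le> Q" using q0 qQ by linarith
  have qp: "q^(d-1) \<le> Q^(d-1)" using q0 qQ by (simp add: power_mono)
  have qp0: "0 \<le> q^(d-1)" using q0 by simp
  have iNu: "1 / Nu \<le> 1 / (1 + L)" using Nu1 L by (intro divide_left_mono) auto
  have iNu0: "0 \<le> 1 / Nu" using Nu0 by simp
  define p where "p = u / Nu"
  have p0: "0 \<le> p" using u0 Nu0 by (simp add: p_def)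
  have pU: "p \<le> U / (1 + U)"
  proof -
    have "p \<le> u / (1 + u)" unfolding p_def using Nu1 u0 by (intro divide_left_mono) auto
    also have "\<dots> \<le> U / (1 + U)" using L u0 by (intro frac_le_cross) (auto simp: algebra_simps)
    finally show ?thesis .
  qed
  have gW: "(1 + w + u * w) / Nu \<le> 1 / (1 + L) + c"
  proof -
    have uw: "0 \<le> u * w" using u0 wc by simp
    have "(1 + w + u * w) / Nu \<le> (1 + w + u * w) / (1 + u)"
      using Nu1 u0 uw wc by (intro divide_left_mono) auto
    also have "\<dots> = 1 / (1 + u) + w" using u0 by (simp add: field_simps)
    also have "\<dots> \<le> 1 / (1 + L) + c" using L wc by (intro add_mono divide_left_mono) auto
    finally show ?thesis .
  qed
  have gW0: "0 \<le> (1 + w + u * w) / Nu" using Nu0 u0 wc by simp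
  have bnd0: "0 \<le> nv / ((1 + L * (1 + c)) * (1 + L))" using c0 L Lc by (simp add: nv_def algebra_simps)
  have e1: "Nz / Nu^2 = rho * (1 / Nu)" by (simp add: rho_def power2_eq_square)
  have e2: "u * (1 + w + u * w) / Nu^2 = p * ((1 + w + u * w) / Nu)" by (simp add: p_def power2_eq_square)
  have e3: "u * z / Nu = p * z" by (simp add: p_def)
  have r1: "rho * (1 / Nu) \<le> nv / ((1 + L * (1 + c)) * (1 + L))"
  proof -
    have "rho * (1 / Nu) \<le> (nv / (1 + L * (1 + c))) * (1 / (1 + L))"
      using rho1 rho2 iNu rho0 iNu0 by (intro mult_mono) auto
    then show ?thesis by simp
  qed
  have r2: "p * ((1 + w + u * w) / Nu) \<le> U / (1 + U) * (1 / (1 + L) + c)"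
    using pU gW p0 gW0 by (intro mult_mono) auto
  have r3: "p * z \<le> U / (1 + U) * c"
    using pU zc p0 by (intro mult_mono) auto
  show "0 \<le> real d * q^(d-1) * (Nz / Nu^2) \<and>
         real d * q^(d-1) * (Nz / Nu^2) \<le> real d * Q^(d-1) * (nv / ((1 + L * (1 + c)) * (1 + L)))"
    unfolding e1 by (rule chain3) (use qp qp0 r1 rho0 iNu0 in auto)
  show "0 \<le> real d * q^(d-1) * (u * (1 + w + u * w) / Nu^2) \<and>
         real d * q^(d-1) * (u * (1 + w + u * w) / Nu^2) \<le> real d * Q^(d-1) * (U / (1 + U) * (1 / (1 + L) + c))"
    unfolding e2 by (rule chain3[OF qp0 qp mult_nonneg_nonneg[OF p0 gW0] r2])
  show "0 \<le> real d * q^(d-1) * (u * z / Nu) \<and>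
         real d * q^(d-1) * (u * z / Nu) \<le> real d * Q^(d-1) * (U / (1 + U) * c)"
    unfolding e3 by (rule chain3) (use qp qp0 r3 p0 zc in auto)
qed



lemma g_deriv:
  fixes s :: real and k :: nat
  assumes "k \<ge> 1"
  shows "((\<lambda>x. x * (1 - s * x)^k) has_real_derivative ((1 - s * x)^(k-1) * (1 - real (k+1) * s * x))) (at x)"
proof -
  have "((\<lambda>x. x * (1 - s * x)^k) has_real_derivative
     (1 * (1 - s * x)^k + x * (real k * (1 - s * x)^(k-1) * (0 - s * 1)))) (at x)"
    by (rule derivative_eq_intros refl)+ (simp add: algebra_simps)
  moreover have "1 * (1 - s * x)^k + x * (real k * (1 - s * x)^(k-1) * (0 - s * 1))
      = (1 - s * x)^(k-1) * (1 - real (k+1) * s * x)"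
  proof -
    have "(1 - s * x)^k = (1 - s * x)^(k-1) * (1 - s * x)"
      using assms by (metis Suc_diff_le diff_Suc_1 power_Suc2)
    then show ?thesis by (simp add: algebra_simps)
  qed
  ultimately show ?thesis by simp
qed

lemma g_incr:
  fixes s t t' :: real and k :: nat
  assumes "k \<ge> 1" "0 \<le> s" "0 \<le> t" "t \<le> t'" "real (k+1) * s * t' \<le> 1"
  shows "t * (1 - s * t)^k \<le> t' * (1 - s * t')^k"
proof (rule deriv_nonneg_imp_mono[of t t' _ "\<lambda>x. (1 - s * x)^(k-1) * (1 - real (k+1) * s * x)"])
  fix x assume x: "x \<in> {t..t'}"
  show "((\<lambda>x. x * (1 - s * x)^k) has_real_derivative ((1 - s * x)^(k-1) * (1 - real (k+1) * s * x))) (at x)"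
    using g_deriv[OF assms(1)] .
  have "real (k+1) * s * x \<le> real (k+1) * s * t'" using x assms by (intro mult_left_mono) auto
  then have a: "0 \<le> 1 - real (k+1) * s * x" using assms by linarith
  have "s * x \<le> real (k+1) * s * x" using x assms by (simp add: mult_right_mono algebra_simps)
  then have "0 \<le> 1 - s * x" using a by linarith
  then show "0 \<le> (1 - s * x)^(k-1) * (1 - real (k+1) * s * x)" using a by simp
qed (use assms in auto)

lemma g_decr:
  fixes s t t' :: real and k :: nat
  assumes "k \<ge> 1" "0 \<le> s" "0 \<le> t" "t \<le> t'" "1 \<le> real (k+1) * s * t" "s * t' \<le> 1"
  shows "t' * (1 - s * t')^k \<le> t * (1 - s * t)^k"
proof -
  have "(\<lambda>x. - (x * (1 - s * x)^k)) t \<le> (\<lambda>x. - (x * (1 - s * x)^k)) t'"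
  proof (rule deriv_nonneg_imp_mono[of t t' _ "\<lambda>x. - ((1 - s * x)^(k-1) * (1 - real (k+1) * s * x))"])
    fix x assume x: "x \<in> {t..t'}"
    show "((\<lambda>x. - (x * (1 - s * x)^k)) has_real_derivative - ((1 - s * x)^(k-1) * (1 - real (k+1) * s * x))) (at x)"
      using g_deriv[OF assms(1)] by (rule DERIV_minus)
    have "real (k+1) * s * t \<le> real (k+1) * s * x" using x assms by (intro mult_left_mono) auto
    then have a: "1 - real (k+1) * s * x \<le> 0" using assms by linarith
    have "s * x \<le> s * t'" using x assms by (intro mult_left_mono) auto
    then have "0 \<le> 1 - s * x" using assms by linarith
    then show "0 \<le> - ((1 - s * x)^(k-1) * (1 - real (k+1) * s * x))" using a
      by (simp add: mult_nonneg_nonpos)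
  qed (use assms in auto)
  then show ?thesis by simp
qed

lemma row1_bounds:
  fixes d :: nat and a b c x1 x2 :: real
  assumes ab: "0 < a" "a \<le> x1" "x1 \<le> b" and c: "0 \<le> x2" "x2 \<le> c" "c < 1"
  defines "s0 \<equiv> a / (1 + 2 * a)" and "s1 \<equiv> b / (1 + 2 * b)"
  defines "r \<equiv> (1 + x1 + x1 * x2) / (1 + 2 * x1)"
  shows "\<bar>real d * r^(d-1) * ((x2 - 1) / (1 + 2 * x1)^2)\<bar> \<le> real d * (1 - 2 * s0)^2 * ((1 - x2) * (1 - s0 * (1 - x2))^(d-1))"
    and "\<bar>real d * r^(d-1) * (x1 / (1 + 2 * x1))\<bar> \<le> real d * (1 - s0 * (1 - c))^(d-1) * s1"
proof -
  define s where "s = x1 / (1 + 2 * x1)"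
  define t where "t = 1 - x2"
  have x10: "0 < x1" using ab by linarith
  have s0s: "s0 \<le> s" unfolding s0_def s_def using ab by (intro frac_le_cross) (auto simp: algebra_simps)
  have ss1: "s \<le> s1" unfolding s1_def s_def using ab by (intro frac_le_cross) (auto simp: algebra_simps)
  have s00: "0 \<le> s0" using ab by (simp add: s0_def)
  have s2: "1 - 2 * s = 1 / (1 + 2 * x1)" using x10 by (simp add: s_def field_simps)
  have s2p: "0 < 1 - 2 * s" using s2 x10 by simp
  have t0: "0 < t" "t \<le> 1" "1 - c \<le> t" using c by (auto simp: t_def)
  have r_eq: "r = 1 - s * t" using x10 by (simp add: r_def s_def t_def field_simps)
  have st: "s * t \<le> s" using t0 s2p s0s s00 by (simp add: mult_left_le)
  have r0: "0 \<le> r" using r_eq st s2p by linarith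
  have rs0: "r \<le> 1 - s0 * t" using r_eq s0s t0 by (simp add: mult_right_mono)
  have e1: "(x2 - 1) / (1 + 2 * x1)^2 = - (t * (1 - 2 * s)^2)" unfolding s2 by (simp add: t_def power_divide minus_divide_left)
  have "\<bar>real d * r^(d-1) * ((x2 - 1) / (1 + 2 * x1)^2)\<bar> = real d * (1 - 2 * s)^2 * (t * r^(d-1))"
    unfolding e1 using r0 t0 by (simp add: abs_mult)
  also have "\<dots> \<le> real d * (1 - 2 * s0)^2 * (t * (1 - s0 * t)^(d-1))"
  proof (intro mult_mono mult_left_mono power_mono)
    show "1 - 2 * s \<le> 1 - 2 * s0" using s0s by simp
  qed (use s2p r0 rs0 t0 in auto)
  finally show "\<bar>real d * r^(d-1) * ((x2 - 1) / (1 + 2 * x1)^2)\<bar> \<le> real d * (1 - 2 * s0)^2 * ((1 - x2) * (1 - s0 * (1 - x2))^(d-1))"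
    by (simp add: t_def)
  have "\<bar>real d * r^(d-1) * (x1 / (1 + 2 * x1))\<bar> = real d * r^(d-1) * s"
    using r0 x10 by (simp add: abs_mult s_def)
  also have "\<dots> \<le> real d * (1 - s0 * (1 - c))^(d-1) * s1"
  proof -
    have rc: "r \<le> 1 - s0 * (1 - c)" using rs0 t0 s00 by (smt (verit) mult_left_mono)
    show ?thesis
      by (intro mult_mono mult_left_mono power_mono rc) (use r0 ss1 s2p s0s s00 rc in auto)
  qed
  finally show "\<bar>real d * r^(d-1) * (x1 / (1 + 2 * x1))\<bar> \<le> real d * (1 - s0 * (1 - c))^(d-1) * s1" .
qed



lemma norm_d2:
  assumes "\<And>y. (\<forall>j\<ge>1. \<bar>y j\<bar> \<le> 1) \<Longrightarrow> (\<forall>i\<ge>1. \<bar>Dpsi 2 x y i\<bar> \<le> K)"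
  shows "opnorm_Dpsi 2 x \<le> ereal K"
  unfolding opnorm_Dpsi_def
proof (rule SUP_least)
  fix y assume "y \<in> {y. seqnorm 2 y = 1}"
  then have n: "(SUP i\<in>{1..}. ereal \<bar>y i\<bar>) = 1" by (simp add: seqnorm_def)
  have "\<forall>j\<ge>1. \<bar>y j\<bar> \<le> 1"
  proof (intro allI impI)
    fix j :: nat assume "j \<ge> 1"
    then have "ereal \<bar>y j\<bar> \<le> (SUP i\<in>{1..}. ereal \<bar>y i\<bar>)" by (intro SUP_upper) auto
    then show "\<bar>y j\<bar> \<le> 1" using n by simp
  qed
  then have b: "\<forall>i\<ge>1. \<bar>Dpsi 2 x y i\<bar> \<le> K" by (rule assms)
  show "seqnorm 2 (Dpsi 2 x y) \<le> ereal K"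
    unfolding seqnorm_def using b by (auto intro!: SUP_least)
qed

lemma norm_d3:
  fixes \<alpha>1 \<alpha>2 \<beta>1 \<beta>2 K :: real
  assumes d: "d \<noteq> 2"
    and B1: "\<And>y \<tau>. (\<forall>j\<ge>2. \<bar>y j\<bar> \<le> \<tau>) \<Longrightarrow> 0 \<le> \<tau> \<Longrightarrow> \<bar>Dpsi d x y 1\<bar> \<le> \<alpha>1 * \<bar>y 1\<bar> + \<beta>1 * \<tau>"
    and B2: "\<And>y \<tau> i. (\<forall>j\<ge>2. \<bar>y j\<bar> \<le> \<tau>) \<Longrightarrow> 0 \<le> \<tau> \<Longrightarrow> i \<ge> 2 \<Longrightarrow> \<bar>Dpsi d x y i\<bar> \<le> \<alpha>2 * \<bar>y 1\<bar> + \<beta>2 * \<tau>"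
    and K: "\<alpha>1 + \<alpha>2 \<le> K" "\<beta>1 + \<beta>2 \<le> K"
  shows "opnorm_Dpsi d x \<le> ereal K"
  unfolding opnorm_Dpsi_def
proof (rule SUP_least)
  fix y assume "y \<in> {y. seqnorm d y = 1}"
  then have n: "ereal \<bar>y 1\<bar> + (SUP i\<in>{2..}. ereal \<bar>y i\<bar>) = 1" using d by (simp add: seqnorm_def)
  define T where "T = (SUP i\<in>{2..}. ereal \<bar>y i\<bar>)"
  have T0: "ereal \<bar>y 2\<bar> \<le> T" unfolding T_def by (intro SUP_upper) auto
  obtain \<tau> where T\<tau>: "T = ereal \<tau>"
    using n T0 unfolding T_def[symmetric] by (cases T) auto
  have \<tau>: "\<bar>y 1\<bar> + \<tau> = 1" using n T\<tau> unfolding T_def[symmetric] by simp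
  have \<tau>0: "0 \<le> \<tau>" using T0 T\<tau> by simp
  have yb: "\<forall>j\<ge>2. \<bar>y j\<bar> \<le> \<tau>"
  proof (intro allI impI)
    fix j :: nat assume "j \<ge> 2"
    then have "ereal \<bar>y j\<bar> \<le> T" unfolding T_def by (intro SUP_upper) auto
    then show "\<bar>y j\<bar> \<le> \<tau>" using T\<tau> by simp
  qed
  have "(SUP i\<in>{2..}. ereal \<bar>Dpsi d x y i\<bar>) \<le> ereal (\<alpha>2 * \<bar>y 1\<bar> + \<beta>2 * \<tau>)"
    using B2[OF yb \<tau>0] by (auto intro!: SUP_least)
  moreover have "ereal \<bar>Dpsi d x y 1\<bar> \<le> ereal (\<alpha>1 * \<bar>y 1\<bar> + \<beta>1 * \<tau>)"
    using B1[OF yb \<tau>0] by simp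
  ultimately have "ereal \<bar>Dpsi d x y 1\<bar> + (SUP i\<in>{2..}. ereal \<bar>Dpsi d x y i\<bar>) \<le> ereal (\<alpha>1 * \<bar>y 1\<bar> + \<beta>1 * \<tau>) + ereal (\<alpha>2 * \<bar>y 1\<bar> + \<beta>2 * \<tau>)"
    by (rule add_mono[rotated])
  then have "seqnorm d (Dpsi d x y) \<le> ereal (\<alpha>1 * \<bar>y 1\<bar> + \<beta>1 * \<tau>) + ereal (\<alpha>2 * \<bar>y 1\<bar> + \<beta>2 * \<tau>)"
    using d unfolding seqnorm_def by simp
  also have "\<dots> = ereal ((\<alpha>1 + \<alpha>2) * \<bar>y 1\<bar> + (\<beta>1 + \<beta>2) * \<tau>)" by (simp add: algebra_simps)
  also have "\<dots> \<le> ereal (K * \<bar>y 1\<bar> + K * \<tau>)"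
    using K \<tau>0 by (simp add: add_mono mult_right_mono)
  also have "\<dots> = ereal (K * (\<bar>y 1\<bar> + \<tau>))" by (simp add: algebra_simps)
  also have "\<dots> = ereal K" using \<tau> by simp
  finally show "seqnorm d (Dpsi d x y) \<le> ereal K" .
qed



definition nvc :: "real \<Rightarrow> real" where "nvc c = 1 + c + c * c"
definition QQ :: "real \<Rightarrow> real \<Rightarrow> real" where "QQ U c = U * nvc c / (1 + U * (1 + c))"
definition RB1 :: "nat \<Rightarrow> real \<Rightarrow> real \<Rightarrow> real \<Rightarrow> real" where "RB1 d L U c = real d * (QQ U c)^(d-1) * (nvc c / ((1 + L * (1 + c)) * (1 + L)))"
definition RB2 :: "nat \<Rightarrow> real \<Rightarrow> real \<Rightarrow> real \<Rightarrow> real" where "RB2 d L U c = real d * (QQ U c)^(d-1) * (U / (1 + U) * (1 / (1 + L) + c))"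
definition RB3 :: "nat \<Rightarrow> real \<Rightarrow> real \<Rightarrow> real \<Rightarrow> real" where "RB3 d L U c = real d * (QQ U c)^(d-1) * (U / (1 + U) * c)"

lemma row_ge2:
  fixes x y :: "nat \<Rightarrow> real"
  assumes i: "i \<ge> 2" and L: "0 \<le> L" "L \<le> x (i-1)" "x (i-1) \<le> U"
    and z: "0 \<le> x i" "x i \<le> c" and w: "0 \<le> x (i+1)" "x (i+1) \<le> c"
    and yb: "\<bar>y (i-1)\<bar> \<le> Y1" "\<bar>y i\<bar> \<le> Y" "\<bar>y (i+1)\<bar> \<le> Y"
  shows "\<bar>Dpsi d x y i\<bar> \<le> RB1 d L U c * Y1 + (RB2 d L U c + RB3 d L U c) * Y"
proof -
  define u where "u = x (i-1)"
  define z where "z = x i"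
  define w where "w = x (i+1)"
  define Nu where "Nu = 1 + u + u * z"
  define Nz where "Nz = 1 + z + z * w"
  define q where "q = u * Nz / Nu"
  define E1 where "E1 = real d * q^(d-1) * (Nz / Nu^2)"
  define E2 where "E2 = real d * q^(d-1) * (u * (1 + w + u * w) / Nu^2)"
  define E3 where "E3 = real d * q^(d-1) * (u * z / Nu)"
  have D: "Dpsi d x y i = E1 * y (i-1) + E2 * y i + E3 * y (i+1)"
    unfolding E1_def E2_def E3_def q_def Nu_def Nz_def u_def z_def w_def
    by (rule Dpsi_ge2) (use i L z w in auto)
  have L': "0 \<le> L" "L \<le> u" "u \<le> U" using L by (auto simp: u_def)
  have z': "0 \<le> z" "z \<le> c" using z by (auto simp: z_def)
  have w': "0 \<le> w" "w \<le> c" using w by (auto simp: w_def)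
  note rb = row_bounds[OF L' z' w', of d]
  have RB: "0 \<le> E1 \<and> E1 \<le> RB1 d L U c" "0 \<le> E2 \<and> E2 \<le> RB2 d L U c" "0 \<le> E3 \<and> E3 \<le> RB3 d L U c"
    unfolding E1_def E2_def E3_def q_def Nu_def Nz_def RB1_def RB2_def RB3_def QQ_def nvc_def
    by (rule rb(1), rule rb(2), rule rb(3))
  have tri: "\<bar>p + q + r\<bar> \<le> \<bar>p\<bar> + \<bar>q\<bar> + \<bar>r\<bar>" for p q r :: real by arith
  have "\<bar>Dpsi d x y i\<bar> \<le> E1 * \<bar>y (i-1)\<bar> + E2 * \<bar>y i\<bar> + E3 * \<bar>y (i+1)\<bar>"
    unfolding D using tri[of "E1 * y (i-1)" "E2 * y i" "E3 * y (i+1)"] RB by (simp add: abs_mult)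
  also have "\<dots> \<le> RB1 d L U c * Y1 + RB2 d L U c * Y + RB3 d L U c * Y"
    using RB yb by (intro add_mono mult_mono) auto
  finally show ?thesis by (simp add: algebra_simps)
qed

lemma row_1:
  fixes x y :: "nat \<Rightarrow> real"
  assumes ab: "0 < a" "a \<le> x 1" "x 1 \<le> b" and c: "0 \<le> x 2" "x 2 \<le> c" "c < 1"
    and G: "\<And>t. 1 - c \<le> t \<Longrightarrow> t \<le> 1 \<Longrightarrow> t * (1 - a / (1 + 2 * a) * t)^(d-1) \<le> G"
    and yb: "\<bar>y 1\<bar> \<le> Y1" "\<bar>y 2\<bar> \<le> Y"
  shows "\<bar>Dpsi d x y 1\<bar> \<le> (real d * (1 - 2 * (a / (1 + 2 * a)))^2 * G) * Y1
           + (real d * (1 - a / (1 + 2 * a) * (1 - c))^(d-1) * (b / (1 + 2 * b))) * Y"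
proof -
  define r where "r = (1 + x 1 + x 1 * x 2) / (1 + 2 * x 1)"
  define A where "A = real d * r^(d-1) * ((x 2 - 1) / (1 + 2 * x 1)^2)"
  define B where "B = real d * r^(d-1) * (x 1 / (1 + 2 * x 1))"
  have D: "Dpsi d x y 1 = A * y 1 + B * y 2"
    unfolding A_def B_def r_def by (rule Dpsi_1) (use ab c in auto)
  note rb = row1_bounds[OF ab c, of d, folded r_def A_def B_def]
  have "\<bar>A\<bar> \<le> real d * (1 - 2 * (a / (1 + 2 * a)))^2 * G"
  proof -
    have "(1 - x 2) * (1 - a / (1 + 2 * a) * (1 - x 2))^(d-1) \<le> G" using G c by auto
    then have "real d * (1 - 2 * (a / (1 + 2 * a)))^2 * ((1 - x 2) * (1 - a / (1 + 2 * a) * (1 - x 2))^(d-1))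
       \<le> real d * (1 - 2 * (a / (1 + 2 * a)))^2 * G" by (intro mult_left_mono) auto
    then show ?thesis using rb(1) unfolding A_def by linarith
  qed
  moreover have "\<bar>B\<bar> \<le> real d * (1 - a / (1 + 2 * a) * (1 - c))^(d-1) * (b / (1 + 2 * b))" using rb(2) .
  ultimately have "\<bar>A\<bar> * \<bar>y 1\<bar> + \<bar>B\<bar> * \<bar>y 2\<bar> \<le> (real d * (1 - 2 * (a / (1 + 2 * a)))^2 * G) * Y1
           + (real d * (1 - a / (1 + 2 * a) * (1 - c))^(d-1) * (b / (1 + 2 * b))) * Y"
    using yb by (intro add_mono mult_mono) auto
  moreover have "\<bar>Dpsi d x y 1\<bar> \<le> \<bar>A\<bar> * \<bar>y 1\<bar> + \<bar>B\<bar> * \<bar>y 2\<bar>"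
    unfolding D by (metis abs_mult abs_triangle_ineq)
  ultimately show ?thesis by linarith
qed

lemma RB_nonneg:
  assumes "0 \<le> L" "0 \<le> U" "0 \<le> c"
  shows "0 \<le> RB1 d L U c" "0 \<le> RB2 d L U c" "0 \<le> RB3 d L U c"
  using assms by (auto simp: RB1_def RB2_def RB3_def QQ_def nvc_def)

lemma main_d3:
  fixes x :: "nat \<Rightarrow> real"
  assumes d: "d \<noteq> 2" and ab: "0 < a" "a \<le> x 1" "x 1 \<le> b" and c: "0 \<le> c" "c < 1"
    and xn: "\<And>n. n \<ge> 2 \<Longrightarrow> 0 \<le> x n \<and> x n \<le> c"
    and G: "\<And>t. 1 - c \<le> t \<Longrightarrow> t \<le> 1 \<Longrightarrow> t * (1 - a / (1 + 2 * a) * t)^(d-1) \<le> G"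
    and K1: "real d * (1 - 2 * (a / (1 + 2 * a)))^2 * G + RB1 d a b c \<le> K"
    and K2: "real d * (1 - a / (1 + 2 * a) * (1 - c))^(d-1) * (b / (1 + 2 * b))
             + max (RB2 d a b c + RB3 d a b c) (RB1 d 0 c c + RB2 d 0 c c + RB3 d 0 c c) \<le> K"
  shows "opnorm_Dpsi d x \<le> ereal K"
proof (rule norm_d3[OF d _ _ K1 K2])
  fix y :: "nat \<Rightarrow> real" and \<tau> :: real
  assume yb: "\<forall>j\<ge>2. \<bar>y j\<bar> \<le> \<tau>" and "0 \<le> \<tau>"
  show "\<bar>Dpsi d x y 1\<bar> \<le> real d * (1 - 2 * (a / (1 + 2 * a)))^2 * G * \<bar>y 1\<bar>
      + real d * (1 - a / (1 + 2 * a) * (1 - c))^(d-1) * (b / (1 + 2 * b)) * \<tau>"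
    by (rule row_1[where G=G]) (use ab c xn[of 2] yb G in auto)
next
  fix y :: "nat \<Rightarrow> real" and \<tau> :: real and i :: nat
  assume yb: "\<forall>j\<ge>2. \<bar>y j\<bar> \<le> \<tau>" and t0: "0 \<le> \<tau>" and i: "2 \<le> i"
  show "\<bar>Dpsi d x y i\<bar> \<le> RB1 d a b c * \<bar>y 1\<bar> + (max (RB2 d a b c + RB3 d a b c) (RB1 d 0 c c + RB2 d 0 c c + RB3 d 0 c c)) * \<tau>"
  proof (cases "i = 2")
    case True
    have "\<bar>Dpsi d x y i\<bar> \<le> RB1 d a b c * \<bar>y 1\<bar> + (RB2 d a b c + RB3 d a b c) * \<tau>"
      using True by (intro row_ge2) (use ab xn[of 2] xn[of 3] yb in auto)
    also have "\<dots> \<le> RB1 d a b c * \<bar>y 1\<bar> + (max (RB2 d a b c + RB3 d a b c) (RB1 d 0 c c + RB2 d 0 c c + RB3 d 0 c c)) * \<tau>"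
      using t0 by (intro add_mono mult_right_mono) auto
    finally show ?thesis .
  next
    case False
    then have i3: "i \<ge> 3" using i by auto
    have "\<bar>Dpsi d x y i\<bar> \<le> RB1 d 0 c c * \<tau> + (RB2 d 0 c c + RB3 d 0 c c) * \<tau>"
      by (rule row_ge2) (use i3 xn[of "i-1"] xn[of i] xn[of "i+1"] yb in auto)
    also have "\<dots> = (RB1 d 0 c c + RB2 d 0 c c + RB3 d 0 c c) * \<tau>" by (simp add: algebra_simps)
    also have "\<dots> \<le> (max (RB2 d a b c + RB3 d a b c) (RB1 d 0 c c + RB2 d 0 c c + RB3 d 0 c c)) * \<tau>" using t0 by (intro mult_right_mono) auto
    also have "\<dots> \<le> RB1 d a b c * \<bar>y 1\<bar> + (max (RB2 d a b c + RB3 d a b c) (RB1 d 0 c c + RB2 d 0 c c + RB3 d 0 c c)) * \<tau>"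
      using RB_nonneg(1)[of a b c d] ab c by simp
    finally show ?thesis .
  qed
qed

lemma main_d2:
  fixes x :: "nat \<Rightarrow> real"
  assumes ab: "0 < a" "a \<le> x 1" "x 1 \<le> b" and c: "0 \<le> c" "c < 1" and m: "a \<le> m" "m \<le> b"
    and xn: "\<And>n. n \<ge> 2 \<Longrightarrow> 0 \<le> x n \<and> x n \<le> c"
    and G: "\<And>t. 1 - c \<le> t \<Longrightarrow> t \<le> 1 \<Longrightarrow> t * (1 - a / (1 + 2 * a) * t)^(2-1) \<le> G"
    and K1: "real 2 * (1 - 2 * (a / (1 + 2 * a)))^2 * G + real 2 * (1 - a / (1 + 2 * a) * (1 - c))^(2-1) * (b / (1 + 2 * b)) \<le> K"
    and K2: "RB1 2 a m c + RB2 2 a m c + RB3 2 a m c \<le> K"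
    and K3: "RB1 2 m b c + RB2 2 m b c + RB3 2 m b c \<le> K"
    and K4: "RB1 2 0 c c + RB2 2 0 c c + RB3 2 0 c c \<le> K"
  shows "opnorm_Dpsi 2 x \<le> ereal K"
proof (rule norm_d2, intro allI impI)
  fix y :: "nat \<Rightarrow> real" and i :: nat
  assume yb: "\<forall>j\<ge>1. \<bar>y j\<bar> \<le> 1" and i: "1 \<le> i"
  consider "i = 1" | "i = 2" "x 1 \<le> m" | "i = 2" "m \<le> x 1" | "i \<ge> 3" using i by linarith
  then show "\<bar>Dpsi 2 x y i\<bar> \<le> K"
  proof cases
    case 1
    have "\<bar>Dpsi 2 x y 1\<bar> \<le> real 2 * (1 - 2 * (a / (1 + 2 * a)))^2 * G * 1
           + real 2 * (1 - a / (1 + 2 * a) * (1 - c))^(2-1) * (b / (1 + 2 * b)) * 1"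
      by (rule row_1[where G=G]) (use ab c xn[of 2] yb G in auto)
    then show ?thesis using 1 K1 by simp
  next
    case 2
    have "\<bar>Dpsi 2 x y i\<bar> \<le> RB1 2 a m c * 1 + (RB2 2 a m c + RB3 2 a m c) * 1"
      using 2 by (intro row_ge2) (use ab xn[of 2] xn[of 3] yb in auto)
    then show ?thesis using K2 by simp
  next
    case 3
    have "\<bar>Dpsi 2 x y i\<bar> \<le> RB1 2 m b c * 1 + (RB2 2 m b c + RB3 2 m b c) * 1"
      using 3 ab by (intro row_ge2) (use ab m xn[of 2] xn[of 3] yb in auto)
    then show ?thesis using K3 by simp
  next
    case 4
    have "\<bar>Dpsi 2 x y i\<bar> \<le> RB1 2 0 c c * 1 + (RB2 2 0 c c + RB3 2 0 c c) * 1"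
      by (rule row_ge2) (use 4 xn[of "i-1"] xn[of i] xn[of "i+1"] yb in auto)
    then show ?thesis using K4 by simp
  qed
qed



lemma g_crude:
  fixes s0 c t :: real
  assumes "0 \<le> s0" "s0 \<le> 1" "1 - c \<le> t" "t \<le> 1" "0 \<le> t"
  shows "t * (1 - s0 * t)^k \<le> (1 - s0 * (1 - c))^k"
proof -
  have a: "0 \<le> 1 - s0 * t" using assms by (metis diff_ge_0_iff_ge mult_le_one)
  have b: "1 - s0 * t \<le> 1 - s0 * (1 - c)" using assms by (simp add: mult_left_mono)
  have "t * (1 - s0 * t)^k \<le> 1 * (1 - s0 * (1 - c))^k"
    using a b assms by (intro mult_mono power_mono) auto
  then show ?thesis by simp
qed

lemma S_facts:
  assumes "x \<in> S_set a b c"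
  shows "a \<le> x 1" "x 1 \<le> b" "\<And>n. n \<ge> 2 \<Longrightarrow> 0 \<le> x n \<and> x n \<le> c"
  using assms by (auto simp: S_set_def)

lemma case_d2:
  assumes "x \<in> S_set 0.5 0.7 0.27"
  shows "opnorm_Dpsi 2 x \<le> ereal 0.989"
proof (rule main_d2[where a="0.5" and b="0.7" and c="0.27" and m = "0.6" and G = "(1 - 0.5 / (1 + 2 * 0.5) * (1 - 0.27))^(2-1)"])
  show "\<And>t::real. 1 - 0.27 \<le> t \<Longrightarrow> t \<le> 1 \<Longrightarrow> t * (1 - 0.5 / (1 + 2 * 0.5) * t)^(2-1) \<le> (1 - 0.5 / (1 + 2 * 0.5) * (1 - 0.27))^(2-1)"
    by (rule g_crude) auto
qed (use S_facts[OF assms] in \<open>auto simp: RB1_def RB2_def RB3_def QQ_def nvc_def power_divide eval_nat_numeral max_def\<close>)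

lemma case_d3:
  assumes "x \<in> S_set 0.4 0.6 0.2"
  shows "opnorm_Dpsi 3 x \<le> ereal 0.989"
proof (rule main_d3[where a="0.4" and b="0.6" and c="0.2" and G = "(1 - 0.4 / (1 + 2 * 0.4) * (1 - 0.2))^(3-1)"])
  show "\<And>t::real. 1 - 0.2 \<le> t \<Longrightarrow> t \<le> 1 \<Longrightarrow> t * (1 - 0.4 / (1 + 2 * 0.4) * t)^(3-1) \<le> (1 - 0.4 / (1 + 2 * 0.4) * (1 - 0.2))^(3-1)"
    by (rule g_crude) auto
qed (use S_facts[OF assms] in \<open>auto simp: RB1_def RB2_def RB3_def QQ_def nvc_def power_divide eval_nat_numeral max_def\<close>)

lemma case_d4:
  assumes "x \<in> S_set 0.3 0.5 0.1"
  shows "opnorm_Dpsi 4 x \<le> ereal 0.989"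
proof (rule main_d3[where a="0.3" and b="0.5" and c="0.1" and G = "1 * (1 - 0.3 / (1 + 2 * 0.3) * 1)^(4-1)"])
  show "\<And>t::real. 1 - 0.1 \<le> t \<Longrightarrow> t \<le> 1 \<Longrightarrow> t * (1 - 0.3 / (1 + 2 * 0.3) * t)^(4-1) \<le> 1 * (1 - 0.3 / (1 + 2 * 0.3) * 1)^(4-1)"
    by (rule g_incr) auto
qed (use S_facts[OF assms] in \<open>auto simp: RB1_def RB2_def RB3_def QQ_def nvc_def power_divide eval_nat_numeral max_def\<close>)

lemma case_d5:
  assumes "x \<in> S_set 0.3 0.4 0.1"
  shows "opnorm_Dpsi 5 x \<le> ereal 0.989"
proof (rule main_d3[where a="0.3" and b="0.4" and c="0.1" and G = "(1 - 0.3 / (1 + 2 * 0.3) * (1 - 0.1))^(5-1)"])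
  show "\<And>t::real. 1 - 0.1 \<le> t \<Longrightarrow> t \<le> 1 \<Longrightarrow> t * (1 - 0.3 / (1 + 2 * 0.3) * t)^(5-1) \<le> (1 - 0.3 / (1 + 2 * 0.3) * (1 - 0.1))^(5-1)"
    by (rule g_crude) auto
qed (use S_facts[OF assms] in \<open>auto simp: RB1_def RB2_def RB3_def QQ_def nvc_def power_divide eval_nat_numeral max_def\<close>)

lemma case_d6:
  assumes "x \<in> S_set 0.27 0.32 0.1"
  shows "opnorm_Dpsi 6 x \<le> ereal 0.989"
proof (rule main_d3[where a="0.27" and b="0.32" and c="0.1" and G = "(1 / (6 * (0.27 / (1 + 2 * 0.27)))) * (1 - 0.27 / (1 + 2 * 0.27) * (1 / (6 * (0.27 / (1 + 2 * 0.27)))))^(6-1)"])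
  show "\<And>t::real. 1 - 0.1 \<le> t \<Longrightarrow> t \<le> 1 \<Longrightarrow> t * (1 - 0.27 / (1 + 2 * 0.27) * t)^(6-1) \<le> (1 / (6 * (0.27 / (1 + 2 * 0.27)))) * (1 - 0.27 / (1 + 2 * 0.27) * (1 / (6 * (0.27 / (1 + 2 * 0.27)))))^(6-1)"
    proof -
    fix t :: real assume t: "1 - 0.1 \<le> t" "t \<le> 1"
    show "t * (1 - 0.27 / (1 + 2 * 0.27) * t)^(6-1) \<le> (1 / (6 * (0.27 / (1 + 2 * 0.27)))) * (1 - 0.27 / (1 + 2 * 0.27) * (1 / (6 * (0.27 / (1 + 2 * 0.27)))))^(6-1)"
    proof (cases "t \<le> 1 / (6 * (0.27 / (1 + 2 * 0.27)))")
      case True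
      show ?thesis by (rule g_incr) (use True t in auto)
    next
      case False
      show ?thesis by (rule g_decr) (use False t in auto)
    qed
  qed
qed (use S_facts[OF assms] in \<open>auto simp: RB1_def RB2_def RB3_def QQ_def nvc_def power_divide eval_nat_numeral max_def\<close>)

lemma case_d7:
  assumes "x \<in> S_set 0.26 0.27 0.01"
  shows "opnorm_Dpsi 7 x \<le> ereal 0.989"
proof (rule main_d3[where a="0.26" and b="0.27" and c="0.01" and G = "(1 - 0.01) * (1 - 0.26 / (1 + 2 * 0.26) * (1 - 0.01))^(7-1)"])
  show "\<And>t::real. 1 - 0.01 \<le> t \<Longrightarrow> t \<le> 1 \<Longrightarrow> t * (1 - 0.26 / (1 + 2 * 0.26) * t)^(7-1) \<le> (1 - 0.01) * (1 - 0.26 / (1 + 2 * 0.26) * (1 - 0.01))^(7-1)"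
    by (rule g_decr) auto
qed (use S_facts[OF assms] in \<open>auto simp: RB1_def RB2_def RB3_def QQ_def nvc_def power_divide eval_nat_numeral max_def\<close>)


theorem proposition2p9:
  fixes d :: nat and a b c :: real and x :: "nat \<Rightarrow> real"
  assumes "2 \<le> d" and "d \<le> 7"
    and "abc d = (a, b, c)"
    and "x \<in> S_set a b c"
  shows "opnorm_Dpsi d x < ereal 0.99"
proof -
  have "opnorm_Dpsi d x \<le> ereal 0.989"
  proof -
    consider "d = 2" | "d = 3" | "d = 4" | "d = 5" | "d = 6" | "d = 7" using assms(1,2) by linarith
    then show ?thesis
    proof cases
      case 1
      have "(a, b, c) = (0.5, 0.7, 0.27)" using assms(3) 1 unfolding abc_def by simp
      then have "a = 0.5 \<and> b = 0.7 \<and> c = 0.27" by (simp only: prod.inject)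
      then have "x \<in> S_set 0.5 0.7 0.27" using assms(4) by metis
      then show ?thesis using case_d2 1 by simp
    next
      case 2
      have "(a, b, c) = (0.4, 0.6, 0.2)" using assms(3) 2 unfolding abc_def by simp
      then have "a = 0.4 \<and> b = 0.6 \<and> c = 0.2" by (simp only: prod.inject)
      then have "x \<in> S_set 0.4 0.6 0.2" using assms(4) by metis
      then show ?thesis using case_d3 2 by simp
    next
      case 3
      have "(a, b, c) = (0.3, 0.5, 0.1)" using assms(3) 3 unfolding abc_def by simp
      then have "a = 0.3 \<and> b = 0.5 \<and> c = 0.1" by (simp only: prod.inject)
      then have "x \<in> S_set 0.3 0.5 0.1" using assms(4) by metis
      then show ?thesis using case_d4 3 by simp
    next
      case 4
      have "(a, b, c) = (0.3, 0.4, 0.1)" using assms(3) 4 unfolding abc_def by simp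
      then have "a = 0.3 \<and> b = 0.4 \<and> c = 0.1" by (simp only: prod.inject)
      then have "x \<in> S_set 0.3 0.4 0.1" using assms(4) by metis
      then show ?thesis using case_d5 4 by simp
    next
      case 5
      have "(a, b, c) = (0.27, 0.32, 0.1)" using assms(3) 5 unfolding abc_def by simp
      then have "a = 0.27 \<and> b = 0.32 \<and> c = 0.1" by (simp only: prod.inject)
      then have "x \<in> S_set 0.27 0.32 0.1" using assms(4) by metis
      then show ?thesis using case_d6 5 by simp
    next
      case 6
      have "(a, b, c) = (0.26, 0.27, 0.01)" using assms(3) 6 unfolding abc_def by simp
      then have "a = 0.26 \<and> b = 0.27 \<and> c = 0.01" by (simp only: prod.inject)
      then have "x \<in> S_set 0.26 0.27 0.01" using assms(4) by metis
      then show ?thesis using case_d7 6 by simp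
    qed
  qed
  also have "\<dots> < ereal 0.99" by simp
  finally show ?thesis .
qed
end
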